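(* Let $(X,\tau)$ be a $\mathbb{B}$-topological space and $\gamma$ a closed set of $(X,\tau)$. Then $\gamma$ is irreducible if and only if $\gamma[tt]$ is an irreducible closed subset of the topological space $(X,\tau[tt])$ and $\gamma[ff]$ is an irreducible closed subset of the topological space $(X,\tau[ff])$.
   Context: $\mathbb{B}=\{0,1,tt,ff\}$ is the four-element Boolean algebra with bottom $0$, top $1$, and $tt,ff$ incomparable and complements of each other; $\neg$ is its complement and $a\to b=\neg a\vee b$. $\mathbb{B}^X$ is the set of maps $X\to\mathbb{B}$ with pointwise order and operations; $b_X$ is the constant map with value $b$; $\lambda[b]=\{x\in X:\lambda(x)\ge b\}$. A $\mathbb{B}$-topology on $X$ is a subset $\tau\subseteq\mathbb{B}^X$ containing all constant maps and closed under arbitrary pointwise joins and finite pointwise meets; $\tau[tt]=\{\lambda[tt]:\lambda\in\tau\}$ and $\tau[ff]=\{\lambda[ff]:\lambda\in\tau\}$ are topologies. $\gamma\in\mathbb{B}^X$ is closed if $\neg\gamma\in\tau$. $\mathrm{sub}_X(\lambda,\mu)=\bigwedge_{x\in X}(\lambda(x)\to\mu(x))$. A closed set $\gamma$ is irreducible if (i) $\mathrm{sub}_X(\gamma,b_X)=b$ for all $b\in\mathbb{B}$, and (ii) $\mathrm{sub}_X(\gamma,\mu_1\vee\mu_2)=\mathrm{sub}_X(\gamma,\mu_1)\vee\mathrm{sub}_X(\gamma,\mu_2)$ for all closed sets $\mu_1,\mu_2$. An irreducible closed subset of a topological space is a nonempty closed set not contained in the union of two closed sets unless it is contained in one of them.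 *)

theory Defs
  imports "HOL-Analysis.Analysis" "HOL-Library.Product_Order"
begin

text \<open>The four-element Boolean algebra B = {0,1,tt,ff}, realised as bool \<times> bool with
  componentwise order: 0 = bot = (False,False), 1 = top = (True,True),
  tt = (True,False), ff = (False,True).\<close>

type_synonym B4 = "bool \<times> bool"

definition tt :: B4 where "tt = (True, False)"
definition ff :: B4 where "ff = (False, True)"

definition bimp :: "B4 \<Rightarrow> B4 \<Rightarrow> B4" where "bimp a b = sup (- a) b"

text \<open>Maps X \<rightarrow> B are represented as functions 'a \<Rightarrow> B4 that are bot (= 0) outside X.\<close>

definition Bmaps :: "'a set \<Rightarrow> ('a \<Rightarrow> B4) set" where
  "Bmaps X = {f. \<forall>x. x \<notin> X \<longrightarrow> f x = bot}"

definition constB :: "'a set \<Rightarrow> B4 \<Rightarrow> ('a \<Rightarrow> B4)" where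
  "constB X b = (\<lambda>x. if x \<in> X then b else bot)"

definition negB :: "'a set \<Rightarrow> ('a \<Rightarrow> B4) \<Rightarrow> ('a \<Rightarrow> B4)" where
  "negB X f = (\<lambda>x. if x \<in> X then - f x else bot)"

definition joinB :: "'a set \<Rightarrow> ('a \<Rightarrow> B4) set \<Rightarrow> ('a \<Rightarrow> B4)" where
  "joinB X F = (\<lambda>x. if x \<in> X then (SUP f\<in>F. f x) else bot)"

definition meetB :: "'a set \<Rightarrow> ('a \<Rightarrow> B4) \<Rightarrow> ('a \<Rightarrow> B4) \<Rightarrow> ('a \<Rightarrow> B4)" where
  "meetB X f g = (\<lambda>x. if x \<in> X then inf (f x) (g x) else bot)"

definition cut :: "'a set \<Rightarrow> ('a \<Rightarrow> B4) \<Rightarrow> B4 \<Rightarrow> 'a set" where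
  "cut X f b = {x \<in> X. b \<le> f x}"

definition is_Btopology :: "'a set \<Rightarrow> ('a \<Rightarrow> B4) set \<Rightarrow> bool" where
  "is_Btopology X \<tau> \<longleftrightarrow> \<tau> \<subseteq> Bmaps X
     \<and> (\<forall>b. constB X b \<in> \<tau>)
     \<and> (\<forall>F. F \<subseteq> \<tau> \<longrightarrow> joinB X F \<in> \<tau>)
     \<and> (\<forall>f\<in>\<tau>. \<forall>g\<in>\<tau>. meetB X f g \<in> \<tau>)"

definition Bclosed :: "'a set \<Rightarrow> ('a \<Rightarrow> B4) set \<Rightarrow> ('a \<Rightarrow> B4) \<Rightarrow> bool" where
  "Bclosed X \<tau> g \<longleftrightarrow> g \<in> Bmaps X \<and> negB X g \<in> \<tau>"

definition subB :: "'a set \<Rightarrow> ('a \<Rightarrow> B4) \<Rightarrow> ('a \<Rightarrow> B4) \<Rightarrow> B4" where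
  "subB X f g = (INF x\<in>X. bimp (f x) (g x))"

definition Birreducible :: "'a set \<Rightarrow> ('a \<Rightarrow> B4) set \<Rightarrow> ('a \<Rightarrow> B4) \<Rightarrow> bool" where
  "Birreducible X \<tau> g \<longleftrightarrow> Bclosed X \<tau> g
     \<and> (\<forall>b. subB X g (constB X b) = b)
     \<and> (\<forall>m1 m2. Bclosed X \<tau> m1 \<longrightarrow> Bclosed X \<tau> m2 \<longrightarrow>
           subB X g (sup m1 m2) = sup (subB X g m1) (subB X g m2))"

definition level_top :: "'a set \<Rightarrow> ('a \<Rightarrow> B4) set \<Rightarrow> B4 \<Rightarrow> 'a topology" where
  "level_top X \<tau> b = topology (\<lambda>U. \<exists>f\<in>\<tau>. U = cut X f b)"

definition irreducible_closed :: "'a topology \<Rightarrow> 'a set \<Rightarrow> bool" where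
  "irreducible_closed T S \<longleftrightarrow> closedin T S \<and> S \<noteq> {}
     \<and> (\<forall>A B. closedin T A \<longrightarrow> closedin T B \<longrightarrow> S \<subseteq> A \<union> B \<longrightarrow> S \<subseteq> A \<or> S \<subseteq> B)"

end

theory Submission
  imports Defs
begin

definition atomB :: "B4 \<Rightarrow> bool" where "atomB b \<longleftrightarrow> b = tt \<or> b = ff"

lemma atom_cases: "atomB b \<Longrightarrow> (b = tt \<Longrightarrow> P) \<Longrightarrow> (b = ff \<Longrightarrow> P) \<Longrightarrow> P"
  unfolding atomB_def by blast

lemma le_Sup_atom: "atomB b \<Longrightarrow> b \<le> Sup (A::B4 set) \<longleftrightarrow> (\<exists>a\<in>A. b \<le> a)"
  by (erule atom_cases) (auto simp: tt_def ff_def less_eq_prod_def fst_Sup snd_Sup)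

lemma le_uminus_atom: "atomB b \<Longrightarrow> b \<le> - (a::B4) \<longleftrightarrow> \<not> b \<le> a"
  by (erule atom_cases) (auto simp: tt_def ff_def less_eq_prod_def uminus_prod_def)

lemma le_sup_atom: "atomB b \<Longrightarrow> b \<le> sup (a::B4) c \<longleftrightarrow> b \<le> a \<or> b \<le> c"
  by (erule atom_cases) (auto simp: tt_def ff_def less_eq_prod_def)

lemma le_bot_atom: "atomB b \<Longrightarrow> \<not> b \<le> (bot::B4)"
  by (erule atom_cases) (auto simp: tt_def ff_def less_eq_prod_def)

lemma le_subB_atom: "atomB b \<Longrightarrow> b \<le> subB X g h \<longleftrightarrow> (\<forall>x\<in>X. b \<le> g x \<longrightarrow> b \<le> h x)"
  by (simp add: subB_def bimp_def le_INF_iff le_sup_atom le_uminus_atom)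

lemma B4_eqI: "(tt \<le> a \<longleftrightarrow> tt \<le> c) \<Longrightarrow> (ff \<le> a \<longleftrightarrow> ff \<le> c) \<Longrightarrow> (a::B4) = c"
  by (cases a; cases c) (auto simp: tt_def ff_def)

lemma atom_tt: "atomB tt" and atom_ff: "atomB ff" by (auto simp: atomB_def)

lemma tt_ff: "\<not> tt \<le> ff" "\<not> ff \<le> tt" by (auto simp: tt_def ff_def)

lemma cut_sub: "cut X f b \<subseteq> X" by (auto simp: cut_def)

lemma Btop_const: "is_Btopology X \<tau> \<Longrightarrow> constB X b \<in> \<tau>"
  unfolding is_Btopology_def by (elim conjE) (drule spec[of _ b], assumption)

lemma Btop_join: "is_Btopology X \<tau> \<Longrightarrow> F \<subseteq> \<tau> \<Longrightarrow> joinB X F \<in> \<tau>"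
  unfolding is_Btopology_def by (elim conjE) (drule spec[of _ F], blast)

lemma Btop_meet: "is_Btopology X \<tau> \<Longrightarrow> f \<in> \<tau> \<Longrightarrow> g \<in> \<tau> \<Longrightarrow> meetB X f g \<in> \<tau>"
  unfolding is_Btopology_def by (elim conjE) (drule bspec[of _ _ f], assumption, drule bspec[of _ _ g], assumption+)

lemma Btop_sub: "is_Btopology X \<tau> \<Longrightarrow> \<tau> \<subseteq> Bmaps X"
  unfolding is_Btopology_def by (elim conjE)

lemma istop_level:
  assumes T: "is_Btopology X \<tau>" and b: "atomB b"
  shows "istopology (\<lambda>U. \<exists>f\<in>\<tau>. U = cut X f b)"
  unfolding istopology_def
proof (intro conjI allI impI)
  fix S T assume "\<exists>f\<in>\<tau>. S = cut X f b" "\<exists>f\<in>\<tau>. T = cut X f b"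
  then obtain f g where f: "f \<in> \<tau>" "S = cut X f b" and g: "g \<in> \<tau>" "T = cut X g b" by blast
  have "meetB X f g \<in> \<tau>" using T f(1) g(1) by (rule Btop_meet)
  moreover have "S \<inter> T = cut X (meetB X f g) b" using f g by (auto simp: cut_def meetB_def)
  ultimately show "\<exists>f\<in>\<tau>. S \<inter> T = cut X f b" by blast
next
  fix K assume K: "\<forall>S\<in>K. \<exists>f\<in>\<tau>. S = cut X f b"
  define F where "F = {f \<in> \<tau>. cut X f b \<in> K}"
  have "F \<subseteq> \<tau>" by (auto simp: F_def)
  then have "joinB X F \<in> \<tau>" using T by (intro Btop_join)
  have key: "\<And>x. x \<in> cut X (joinB X F) b \<longleftrightarrow> x \<in> X \<and> (\<exists>f\<in>F. b \<le> f x)"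
    by (simp add: cut_def joinB_def le_Sup_atom[OF b])
  have "\<Union>K = cut X (joinB X F) b"
  proof
    show "\<Union>K \<subseteq> cut X (joinB X F) b"
    proof
      fix x assume "x \<in> \<Union>K"
      then obtain S where S: "S \<in> K" "x \<in> S" by blast
      with K obtain f where f: "f \<in> \<tau>" "S = cut X f b" by blast
      have "f \<in> F" using f S by (simp add: F_def)
      moreover have "x \<in> X" "b \<le> f x" using f S by (simp_all add: cut_def)
      ultimately show "x \<in> cut X (joinB X F) b" using key by blast
    qed
    show "cut X (joinB X F) b \<subseteq> \<Union>K"
    proof
      fix x assume "x \<in> cut X (joinB X F) b"
      then obtain f where "f \<in> F" "x \<in> X" "b \<le> f x" using key by blast
      then have "cut X f b \<in> K" "x \<in> cut X f b" by (simp_all add: F_def cut_def)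
      then show "x \<in> \<Union>K" by blast
    qed
  qed
  moreover note \<open>joinB X F \<in> \<tau>\<close>
  ultimately show "\<exists>f\<in>\<tau>. \<Union>K = cut X f b" by blast
qed

lemma openin_level:
  assumes "is_Btopology X \<tau>" "atomB b"
  shows "openin (level_top X \<tau> b) U \<longleftrightarrow> (\<exists>f\<in>\<tau>. U = cut X f b)"
  using istop_level[OF assms] unfolding level_top_def by simp

lemma topspace_level:
  assumes T: "is_Btopology X \<tau>" and b: "atomB b"
  shows "topspace (level_top X \<tau> b) = X"
proof -
  have c1: "constB X top \<in> \<tau>" using T by (rule Btop_const)
  have c2: "X = cut X (constB X top) b" by (auto simp: cut_def constB_def)
  have "openin (level_top X \<tau> b) X" unfolding openin_level[OF T b]
    using c1 c2 by blast
  hence "X \<subseteq> topspace (level_top X \<tau> b)" by (rule openin_subset)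
  moreover have "topspace (level_top X \<tau> b) \<subseteq> X"
  proof
    fix x assume "x \<in> topspace (level_top X \<tau> b)"
    then obtain U where U: "openin (level_top X \<tau> b) U" "x \<in> U" unfolding topspace_def by blast
    then obtain f where "U = cut X f b" unfolding openin_level[OF T b] by blast
    with U(2) have "x \<in> cut X f b" by simp
    then show "x \<in> X" by (simp add: cut_def)
  qed
  ultimately show ?thesis by (rule antisym[rotated])
qed

lemma closedin_level:
  assumes T: "is_Btopology X \<tau>" and b: "atomB b"
  shows "closedin (level_top X \<tau> b) A \<longleftrightarrow> A \<subseteq> X \<and> (\<exists>f\<in>\<tau>. X - A = cut X f b)"
  unfolding closedin_def topspace_level[OF T b] openin_level[OF T b] by blast

lemma Bclosed_closedin:
  assumes T: "is_Btopology X \<tau>" and b: "atomB b" and m: "Bclosed X \<tau> m"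
  shows "closedin (level_top X \<tau> b) (cut X m b)"
proof -
  have "negB X m \<in> \<tau>" using m by (simp add: Bclosed_def)
  moreover have "X - cut X m b = cut X (negB X m) b"
    using b by (auto simp: cut_def negB_def le_uminus_atom)
  ultimately show ?thesis unfolding closedin_level[OF T b] using cut_sub[of X m b] by blast
qed

lemma closedin_Bclosed:
  assumes T: "is_Btopology X \<tau>" and b: "atomB b" and c: "atomB c" and bc: "\<not> c \<le> b"
    and A: "closedin (level_top X \<tau> b) A"
  shows "\<exists>m. Bclosed X \<tau> m \<and> cut X m b = A \<and> cut X m c = X"
proof -
  obtain f where f: "f \<in> \<tau>" "X - A = cut X f b" and AX: "A \<subseteq> X"
    using A unfolding closedin_level[OF T b] by blast
  define h where "h = meetB X f (constB X b)"
  have h: "h \<in> \<tau>" unfolding h_def by (rule Btop_meet[OF T f(1) Btop_const[OF T]])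
  have hB: "h \<in> Bmaps X" using Btop_sub[OF T] h by blast
  define m where "m = negB X h"
  have "m \<in> Bmaps X" by (simp add: m_def negB_def Bmaps_def)
  moreover have "negB X m = h"
    by (rule ext) (use hB in \<open>simp add: m_def negB_def Bmaps_def\<close>)
  ultimately have "Bclosed X \<tau> m" using h by (simp add: Bclosed_def)
  moreover have "cut X m b = A"
    using b AX f(2) by (auto simp: cut_def m_def negB_def h_def meetB_def constB_def le_uminus_atom[OF b] le_sup_atom[OF b])
  moreover have "cut X m c = X"
    using c bc by (auto simp: cut_def m_def negB_def h_def meetB_def constB_def le_uminus_atom[OF c] le_sup_atom[OF c])
  ultimately show ?thesis by blast
qed

lemma cut_sup: assumes b: "atomB b" shows "cut X (sup f g) b = cut X f b \<union> cut X g b"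
  unfolding cut_def sup_fun_def le_sup_atom[OF b] by blast

lemma subB_cut: assumes b: "atomB b" shows "b \<le> subB X g h \<longleftrightarrow> cut X g b \<subseteq> cut X h b"
  unfolding le_subB_atom[OF b] cut_def by blast

lemma forward:
  assumes T: "is_Btopology X \<tau>" and b: "atomB b" and c: "atomB c" and bc: "\<not> c \<le> b"
    and I: "Birreducible X \<tau> \<gamma>"
  shows "irreducible_closed (level_top X \<tau> b) (cut X \<gamma> b)"
proof -
  have I1: "Bclosed X \<tau> \<gamma>" and I2: "\<And>a. subB X \<gamma> (constB X a) = a"
    and I3: "\<And>m1 m2. Bclosed X \<tau> m1 \<Longrightarrow> Bclosed X \<tau> m2 \<Longrightarrow>
           subB X \<gamma> (sup m1 m2) = sup (subB X \<gamma> m1) (subB X \<gamma> m2)"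
    using I unfolding Birreducible_def by blast+
  show ?thesis unfolding irreducible_closed_def
proof (intro conjI allI impI)
  show "closedin (level_top X \<tau> b) (cut X \<gamma> b)"
    using I1 by (rule Bclosed_closedin[OF T b])
  have "\<not> b \<le> subB X \<gamma> (constB X bot)" using le_bot_atom[OF b] I2[of bot] by simp
  hence "\<not> cut X \<gamma> b \<subseteq> cut X (constB X bot) b" by (simp add: subB_cut[OF b])
  moreover have "cut X (constB X bot) b = {}" using le_bot_atom[OF b] by (auto simp: cut_def constB_def)
  ultimately show "cut X \<gamma> b \<noteq> {}" by blast
next
  fix A B assume A: "closedin (level_top X \<tau> b) A" and B: "closedin (level_top X \<tau> b) B"
    and sub: "cut X \<gamma> b \<subseteq> A \<union> B"
  obtain m1 where m1: "Bclosed X \<tau> m1" "cut X m1 b = A" using closedin_Bclosed[OF T b c bc A] by blast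
  obtain m2 where m2: "Bclosed X \<tau> m2" "cut X m2 b = B" using closedin_Bclosed[OF T b c bc B] by blast
  have eq: "subB X \<gamma> (sup m1 m2) = sup (subB X \<gamma> m1) (subB X \<gamma> m2)"
    using I3 m1(1) m2(1) .
  have "cut X (sup m1 m2) b = A \<union> B" using cut_sup[OF b, of X m1 m2] m1(2) m2(2) by simp
  with sub have "cut X \<gamma> b \<subseteq> cut X (sup m1 m2) b" by simp
  hence "b \<le> subB X \<gamma> (sup m1 m2)" by (simp add: subB_cut[OF b])
  hence "b \<le> subB X \<gamma> m1 \<or> b \<le> subB X \<gamma> m2" using eq le_sup_atom[OF b] by simp
  then show "cut X \<gamma> b \<subseteq> A \<or> cut X \<gamma> b \<subseteq> B" using m1(2) m2(2) by (simp add: subB_cut[OF b])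
qed
qed

lemma backward_const:
  assumes b: "atomB b" and ne: "cut X \<gamma> b \<noteq> {}"
  shows "b \<le> subB X \<gamma> (constB X a) \<longleftrightarrow> b \<le> a"
  using ne by (auto simp: subB_cut[OF b] cut_def constB_def)

lemma backward_sup:
  assumes T: "is_Btopology X \<tau>" and b: "atomB b"
    and I: "irreducible_closed (level_top X \<tau> b) (cut X \<gamma> b)"
    and m1: "Bclosed X \<tau> m1" and m2: "Bclosed X \<tau> m2"
  shows "b \<le> subB X \<gamma> (sup m1 m2) \<longleftrightarrow> b \<le> sup (subB X \<gamma> m1) (subB X \<gamma> m2)"
proof -
  have c1: "closedin (level_top X \<tau> b) (cut X m1 b)" by (rule Bclosed_closedin[OF T b m1])
  have c2: "closedin (level_top X \<tau> b) (cut X m2 b)" by (rule Bclosed_closedin[OF T b m2])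
  show ?thesis
    using I c1 c2 unfolding le_sup_atom[OF b] subB_cut[OF b] cut_sup[OF b] irreducible_closed_def
    by blast
qed

theorem mainTheorem6:
  fixes X :: "'a set" and \<tau> :: "('a \<Rightarrow> B4) set" and \<gamma> :: "'a \<Rightarrow> B4"
  assumes "is_Btopology X \<tau>"
    and "Bclosed X \<tau> \<gamma>"
  shows "Birreducible X \<tau> \<gamma> \<longleftrightarrow>
           irreducible_closed (level_top X \<tau> tt) (cut X \<gamma> tt)
         \<and> irreducible_closed (level_top X \<tau> ff) (cut X \<gamma> ff)"
proof
  assume "Birreducible X \<tau> \<gamma>"
  then show "irreducible_closed (level_top X \<tau> tt) (cut X \<gamma> tt)
         \<and> irreducible_closed (level_top X \<tau> ff) (cut X \<gamma> ff)"
    using forward[OF assms(1) atom_tt atom_ff tt_ff(2)] forward[OF assms(1) atom_ff atom_tt tt_ff(1)]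
    by blast
next
  assume H: "irreducible_closed (level_top X \<tau> tt) (cut X \<gamma> tt)
         \<and> irreducible_closed (level_top X \<tau> ff) (cut X \<gamma> ff)"
  have ne1: "cut X \<gamma> tt \<noteq> {}" and ne2: "cut X \<gamma> ff \<noteq> {}" using H by (auto simp: irreducible_closed_def)
  show "Birreducible X \<tau> \<gamma>"
    unfolding Birreducible_def
  proof (intro conjI allI impI)
    show "Bclosed X \<tau> \<gamma>" by (rule assms(2))
    fix a show "subB X \<gamma> (constB X a) = a"
      by (rule B4_eqI) (simp_all add: backward_const[OF atom_tt ne1] backward_const[OF atom_ff ne2])
  next
    fix m1 m2 assume m1: "Bclosed X \<tau> m1" and m2: "Bclosed X \<tau> m2"
    show "subB X \<gamma> (sup m1 m2) = sup (subB X \<gamma> m1) (subB X \<gamma> m2)"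
      by (rule B4_eqI)
        (use H backward_sup[OF assms(1) atom_tt _ m1 m2] backward_sup[OF assms(1) atom_ff _ m1 m2] in blast)+
  qed
qed

end
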